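(* Let $\mathbb{F}=\mathbb{C}$, let $N\ge2$, $M\ge2$ and $Q$ be integers with $1\le Q\le M-1$, write $\mathcal{M}=\{1,\dots,M\}$, let $0<\epsilon<1$, and let $\mathbf{H}_1,\dots,\mathbf{H}_M$ be $N\times N$ complex Hermitian positive semidefinite matrices. Let $v^{\min}_{\rm QP}$ be the optimal value of (P1): minimize $\|\mathbf{w}\|^2$ over $\mathbf{w}\in\mathbb{C}^N$, $\boldsymbol\beta\in\{0,1\}^M$ subject to $\mathbf{w}^H\mathbf{H}_i\mathbf{w}\ge\beta_i+(1-\beta_i)\epsilon$ ($i\in\mathcal{M}$) and $\sum_i\beta_i=Q$; and let $v^{\min}_{\rm SDP2}$ be the optimal value of (SDP2): minimize $\mathrm{Tr}[\mathbf{X}]$ over Hermitian $N\times N$ matrices $\mathbf{X}\succeq0$ and $\boldsymbol\beta\in\mathbb{R}^M$ subject to $\mathrm{Tr}[\mathbf{H}_i\mathbf{X}]\ge\beta_i+(1-\beta_i)\epsilon$ ($i\in\mathcal{M}$), $\sum_i\beta_i=Q$, $0\le\beta_i\le1$. Then $v^{\min}_{\rm QP}\le\bar\mu_{\mathbb{C}}\,v^{\min}_{\rm SDP2}$ with $$\bar\mu_{\mathbb{C}}=\max\left\{8\Big[M-Q+\frac{1}{c(\epsilon)}Q\Big],\ \frac{24(\sqrt{M}-1)^2}{c(\epsilon)}\right\},$$ where $c(\epsilon)=\epsilon+\frac{1-\epsilon}{M-Q+1}$.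
   Context: ${}^H$ denotes conjugate transpose. *)

theory Defs
  imports "HOL-Analysis.Analysis"
begin

definition cmat_adj :: "complex^'n^'n \<Rightarrow> complex^'n^'n" where
  "cmat_adj A = (\<chi> i j. cnj (A $ j $ i))"

definition hermitian_mat :: "complex^'n^'n \<Rightarrow> bool" where
  "hermitian_mat A \<longleftrightarrow> cmat_adj A = A"

definition qform :: "complex^'n^'n \<Rightarrow> complex^'n \<Rightarrow> complex" where
  "qform A w = (\<Sum>i\<in>UNIV. \<Sum>j\<in>UNIV. cnj (w $ i) * A $ i $ j * w $ j)"

(* Hermitian positive semidefinite: Hermitian and w^H A w >= 0 for all w
   (for Hermitian A the quadratic form is real) *)
definition psd_mat :: "complex^'n^'n \<Rightarrow> bool" where
  "psd_mat A \<longleftrightarrow> hermitian_mat A \<and> (\<forall>w. 0 \<le> Re (qform A w))"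

(* optimal value of (P1), indices 0..M-1; Inf {} = \<infinity> *)
definition v_QP :: "nat \<Rightarrow> nat \<Rightarrow> real \<Rightarrow> (nat \<Rightarrow> complex^'n^'n) \<Rightarrow> ereal" where
  "v_QP M Q \<epsilon> H = Inf {ereal ((norm w)\<^sup>2) | w \<beta>.
      (\<forall>i<M. \<beta> i \<in> {0,1}) \<and>
      (\<forall>i<M. Re (qform (H i) w) \<ge> \<beta> i + (1 - \<beta> i) * \<epsilon>) \<and>
      (\<Sum>i<M. \<beta> i) = real Q}"

definition v_SDP2 :: "nat \<Rightarrow> nat \<Rightarrow> real \<Rightarrow> (nat \<Rightarrow> complex^'n^'n) \<Rightarrow> ereal" where
  "v_SDP2 M Q \<epsilon> H = Inf {ereal (Re (trace X)) | (X :: complex^'n^'n) \<beta>.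
      psd_mat X \<and>
      (\<forall>i<M. Re (trace (H i ** X)) \<ge> \<beta> i + (1 - \<beta> i) * \<epsilon>) \<and>
      (\<Sum>i<M. \<beta> i) = real Q \<and>
      (\<forall>i<M. 0 \<le> \<beta> i \<and> \<beta> i \<le> 1)}"

definition c_eps :: "nat \<Rightarrow> nat \<Rightarrow> real \<Rightarrow> real" where
  "c_eps M Q \<epsilon> = \<epsilon> + (1 - \<epsilon>) / (real M - real Q + 1)"

definition mu_C :: "nat \<Rightarrow> nat \<Rightarrow> real \<Rightarrow> real" where
  "mu_C M Q \<epsilon> = max (8 * (real M - real Q + real Q / c_eps M Q \<epsilon>))
                      (24 * (sqrt (real M) - 1)\<^sup>2 / c_eps M Q \<epsilon>)"

end

theory Submission
  imports Defs "HOL-Probability.Distributions" "HOL-Probability.Infinite_Product_Measure"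
begin


definition cinner :: "complex^'n \<Rightarrow> complex^'n \<Rightarrow> complex" where
  "cinner u v = (\<Sum>i\<in>UNIV. cnj (u$i) * v$i)"

definition outer :: "complex^'n \<Rightarrow> complex^'n \<Rightarrow> complex^'n^'n" where
  "outer u v = (\<chi> i j. u$i * cnj (v$j))"

lemma qform_cinner: "qform A w = cinner w (A *v w)"
  by (simp add: qform_def cinner_def matrix_vector_mult_def sum_distrib_left mult.assoc)

lemma hermitian_entry: "hermitian_mat A \<Longrightarrow> A$i$j = cnj (A$j$i)"
  unfolding hermitian_mat_def cmat_adj_def
  by (metis vec_lambda_beta)

lemma cinner_cnj: "cinner u v = cnj (cinner v u)"
  by (simp add: cinner_def mult.commute)

lemma cinner_herm: assumes "hermitian_mat A"
  shows "cinner u (A *v v) = cnj (cinner v (A *v u))"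
proof -
  have "cinner u (A *v v) = (\<Sum>i\<in>UNIV. \<Sum>j\<in>UNIV. cnj (u$i) * A$i$j * v$j)"
    by (simp add: cinner_def matrix_vector_mult_def sum_distrib_left mult.assoc)
  also have "\<dots> = (\<Sum>j\<in>UNIV. \<Sum>i\<in>UNIV. cnj (u$i) * A$i$j * v$j)"
    by (rule sum.swap)
  also have "\<dots> = cnj (\<Sum>j\<in>UNIV. \<Sum>i\<in>UNIV. cnj (v$j) * A$j$i * u$i)"
  proof -
    have "cnj (u$i) * A$i$j * v$j = cnj (cnj (v$j) * A$j$i * u$i)" for i j
    proof -
      have e: "A$i$j = cnj (A$j$i)" by (rule hermitian_entry[OF assms])
      show ?thesis unfolding e by (simp add: mult.commute mult.left_commute)
    qed
    then show ?thesis by (simp only: cnj_sum)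
  qed
  also have "(\<Sum>j\<in>UNIV. \<Sum>i\<in>UNIV. cnj (v$j) * A$j$i * u$i) = cinner v (A *v u)"
    by (simp add: cinner_def matrix_vector_mult_def sum_distrib_left mult.assoc)
  finally show ?thesis .
qed

lemma cinner_add_right: "cinner u (v + w) = cinner u v + cinner u w"
  by (simp add: cinner_def distrib_left sum.distrib)
lemma cinner_add_left: "cinner (v + w) u = cinner v u + cinner w u"
  by (simp add: cinner_def distrib_right sum.distrib)
lemma cinner_smult_right: "cinner u (a *s v) = a * cinner u v"
  by (simp add: cinner_def sum_distrib_left mult.left_commute)
lemma cinner_smult_left: "cinner (a *s v) u = cnj a * cinner v u"
  by (simp add: cinner_def sum_distrib_left mult.assoc)
lemma cinner_zero_left[simp]: "cinner 0 u = 0" by (simp add: cinner_def)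
lemma cinner_zero_right[simp]: "cinner u 0 = 0" by (simp add: cinner_def)
lemma cinner_sum_right: "cinner u (sum f S) = (\<Sum>x\<in>S. cinner u (f x))"
  by (induction S rule: infinite_finite_induct) (auto simp: cinner_add_right)
lemma cinner_sum_left: "cinner (sum f S) u = (\<Sum>x\<in>S. cinner (f x) u)"
  by (induction S rule: infinite_finite_induct) (auto simp: cinner_add_left)

lemma mv_add: "A *v (v + w) = A *v v + A *v w"
  by (simp add: matrix_vector_right_distrib)
lemma mv_smult: "(A::complex^'n^'m) *v (a *s v) = a *s (A *v v)"
  unfolding vec_eq_iff matrix_vector_mult_def
  by (auto simp: sum_distrib_left intro!: sum.cong simp: algebra_simps)

lemma cnj_mult_self: "cnj a * a = of_real ((cmod a)\<^sup>2)"
  using cmod_power2[of a] by (simp add: complex_eq_iff power2_eq_square)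

lemma cinner_self: "cinner v v = of_real ((norm v)\<^sup>2)"
proof -
  have "cinner v v = (\<Sum>i\<in>UNIV. of_real ((cmod (v$i))\<^sup>2))"
    unfolding cinner_def
    by (rule sum.cong) (auto simp: cnj_mult_self)
  also have "\<dots> = of_real (\<Sum>i\<in>UNIV. (cmod (v$i))\<^sup>2)" by simp
  also have "(\<Sum>i\<in>UNIV. (cmod (v$i))\<^sup>2) = (norm v)\<^sup>2"
    by (simp add: norm_vec_def L2_set_def sum_nonneg)
  finally show ?thesis .
qed

lemma Re_cinner_self: "Re (cinner v v) = (norm v)\<^sup>2"
  by (simp add: cinner_self)

lemma qform_expand:
  assumes "hermitian_mat A"
  shows "Re (qform A (a *s v + r)) =
     (cmod a)\<^sup>2 * Re (qform A v) + 2 * Re (cnj a * cinner v (A *v r)) + Re (qform A r)"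
proof -
  have h: "cinner r (A *v v) = cnj (cinner v (A *v r))" by (rule cinner_herm[OF assms])
  have "qform A (a *s v + r) = cinner (a *s v + r) (a *s (A *v v) + A *v r)"
    by (simp add: qform_cinner mv_add mv_smult)
  also have "\<dots> = cnj a * (a * cinner v (A *v v)) + cnj a * cinner v (A *v r)
      + (a * cinner r (A *v v) + cinner r (A *v r))"
    by (simp only: cinner_add_left cinner_add_right cinner_smult_left cinner_smult_right)
       (simp add: algebra_simps)
  also have "\<dots> = of_real ((cmod a)\<^sup>2) * qform A v + (cnj a * cinner v (A *v r) + cnj (cnj a * cinner v (A *v r)))
      + qform A r"
    by (simp add: h qform_cinner cnj_mult_self mult.assoc[symmetric])
  finally show ?thesis
    by (simp add: complex_add_cnj)
qed



lemma mv_diff: "(A - B :: complex^'n^'m) *v r = A *v r - B *v r"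
  by (simp add: vec_eq_iff matrix_vector_mult_def sum_subtractf left_diff_distrib)

lemma mv_scaleR: "((c::real) *\<^sub>R (A :: complex^'n^'m)) *v r = of_real c *s (A *v r)"
  unfolding vec_eq_iff matrix_vector_mult_def
  by (simp add: vector_scaleR_component sum_distrib_left mult.assoc del: scaleR_conv_of_real)
     (simp add: scaleR_conv_of_real)

lemma mv_outer: "outer u u *v r = cinner u r *s u"
  by (simp add: vec_eq_iff matrix_vector_mult_def outer_def cinner_def sum_distrib_left mult.commute
      mult.left_commute)

lemma cinner_diff_right: "cinner u (v - w) = cinner u v - cinner u w"
  by (simp add: cinner_def right_diff_distrib sum_subtractf)

lemma qform_outer: "qform (outer u u) r = of_real ((cmod (cinner u r))\<^sup>2)"
proof -
  have "qform (outer u u) r = cinner u r * cinner r u"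
    by (simp add: qform_cinner mv_outer cinner_smult_right)
  also have "\<dots> = cnj (cinner u r) * cinner u r"
    by (metis cinner_cnj mult.commute)
  finally show ?thesis by (simp add: cnj_mult_self)
qed

lemma qform_diff_scaleR: "qform (A - (c::real) *\<^sub>R B) r = qform A r - of_real c * qform B r"
  by (simp add: qform_cinner mv_diff mv_scaleR cinner_diff_right cinner_smult_right)

lemma hermitian_diff: "hermitian_mat A \<Longrightarrow> hermitian_mat B \<Longrightarrow> hermitian_mat (A - (c::real) *\<^sub>R B)"
  unfolding hermitian_mat_def cmat_adj_def
  by (simp add: vec_eq_iff)

lemma hermitian_outer: "hermitian_mat (outer u u)"
  unfolding hermitian_mat_def cmat_adj_def outer_def by (simp add: vec_eq_iff mult.commute)

lemma psd_CS:
  assumes "psd_mat H"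
  shows "(cmod (cinner v (H *v r)))\<^sup>2 \<le> Re (qform H v) * Re (qform H r)"
proof -
  have herm: "hermitian_mat H" using assms by (simp add: psd_mat_def)
  define b where "b = cinner v (H *v r)"
  define p where "p = Re (qform H v)"
  define q where "q = Re (qform H r)"
  have key: "0 \<le> s\<^sup>2 * (cmod b)\<^sup>2 * p - 2 * s * (cmod b)\<^sup>2 + q" for s :: real
  proof -
    have "0 \<le> Re (qform H ((- of_real s * b) *s v + r))"
      using assms by (simp add: psd_mat_def)
    also have "\<dots> = (cmod (- of_real s * b))\<^sup>2 * p + 2 * Re (cnj (- of_real s * b) * b) + q"
      unfolding qform_expand[OF herm] p_def q_def b_def ..
    also have "\<dots> = s\<^sup>2 * (cmod b)\<^sup>2 * p - 2 * s * (cmod b)\<^sup>2 + q"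
    proof -
      have "cnj (- of_real s * b) * b = - of_real s * (cnj b * b)" by simp
      also have "\<dots> = - of_real (s * (cmod b)\<^sup>2)" by (simp only: cnj_mult_self) simp
      finally have e0: "cnj (- of_real s * b) * b = - of_real (s * (cmod b)\<^sup>2)" .
      have e1: "Re (cnj (- of_real s * b) * b) = - (s * (cmod b)\<^sup>2)" unfolding e0 by simp
      have e2: "(cmod (- of_real s * b))\<^sup>2 = s\<^sup>2 * (cmod b)\<^sup>2"
        by (simp add: norm_mult power_mult_distrib)
      show ?thesis unfolding e1 e2 by simp
    qed
    finally show ?thesis .
  qed
  have p0: "0 \<le> p" using assms by (simp add: psd_mat_def p_def)
  have q0: "0 \<le> q" using assms by (simp add: psd_mat_def q_def)
  show ?thesis
  proof (cases "p = 0")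
    case True
    have "(cmod b)\<^sup>2 = 0"
    proof (rule ccontr)
      assume ne: "(cmod b)\<^sup>2 \<noteq> 0"
      then have pos: "(cmod b)\<^sup>2 > 0" by simp
      from key[of "(q + 1) / (cmod b)\<^sup>2"] True pos
      have "q * (cmod b)\<^sup>2 + 2 * (cmod b)\<^sup>2 \<le> 0"
        by (simp add: field_simps)
      moreover have "0 \<le> q * (cmod b)\<^sup>2" using q0 by simp
      ultimately show False using pos by linarith
    qed
    then show ?thesis using True p0 q0 by (simp add: b_def p_def q_def)
  next
    case False
    then have pp: "p > 0" using p0 by simp
    from key[of "1 / p"] pp have "0 \<le> (cmod b)\<^sup>2 / p - 2 * (cmod b)\<^sup>2 / p + q"
      by (simp add: field_simps power2_eq_square)
    then have "(cmod b)\<^sup>2 / p \<le> q" by simp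
    then show ?thesis using pp by (simp add: field_simps b_def p_def q_def mult.commute)
  qed
qed

lemma cinner_Hv:
  assumes "hermitian_mat H" shows "cinner (H *v v) r = cinner v (H *v r)"
  by (metis assms cinner_cnj cinner_herm complex_cnj_cnj)

lemma psd_update:
  assumes "psd_mat H" "0 \<le> c" "c * Re (qform H v) \<le> 1"
  defines "H' \<equiv> H - c *\<^sub>R outer (H *v v) (H *v v)"
  shows "psd_mat H'"
    and "Re (qform H' r) = Re (qform H r) - c * (cmod (cinner v (H *v r)))\<^sup>2"
    and "Re (qform H' r) \<ge> (1 - c * Re (qform H v)) * Re (qform H r)"
proof -
  have herm: "hermitian_mat H" using assms(1) by (simp add: psd_mat_def)
  have eq: "Re (qform H' r) = Re (qform H r) - c * (cmod (cinner v (H *v r)))\<^sup>2" for r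
    unfolding H'_def qform_diff_scaleR qform_outer cinner_Hv[OF herm] by simp
  show "Re (qform H' r) = Re (qform H r) - c * (cmod (cinner v (H *v r)))\<^sup>2" by (rule eq)
  have ge: "Re (qform H' r) \<ge> (1 - c * Re (qform H v)) * Re (qform H r)" for r
  proof -
    have "c * (cmod (cinner v (H *v r)))\<^sup>2 \<le> c * (Re (qform H v) * Re (qform H r))"
      using psd_CS[OF assms(1)] assms(2) by (simp add: mult_left_mono)
    then show ?thesis unfolding eq by (simp add: algebra_simps)
  qed
  show "Re (qform H' r) \<ge> (1 - c * Re (qform H v)) * Re (qform H r)" by (rule ge)
  show "psd_mat H'"
    unfolding psd_mat_def
  proof
    show "hermitian_mat H'" unfolding H'_def by (rule hermitian_diff[OF herm hermitian_outer])
    show "\<forall>w. 0 \<le> Re (qform H' w)"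
    proof
      fix w
      have "0 \<le> (1 - c * Re (qform H v)) * Re (qform H w)"
        using assms(1,3) by (simp add: psd_mat_def)
      then show "0 \<le> Re (qform H' w)" using ge[of w] by linarith
    qed
  qed
qed



definition corth :: "(complex^'n) set \<Rightarrow> bool" where
  "corth S \<longleftrightarrow> (\<forall>u\<in>S. \<forall>v\<in>S. u \<noteq> v \<longrightarrow> cinner u v = 0)"

lemma inner_cinner: "inner u v = Re (cinner u v)"
  by (simp add: inner_vec_def cinner_def inner_complex_def)

lemma corth_card:
  fixes S :: "(complex^'n) set"
  assumes "corth S" "0 \<notin> S"
  shows "finite S \<and> card S \<le> CARD('n)"
proof -
  define T where "T = S \<union> (\<lambda>u. \<i> *s u) ` S"
  have nz: "cinner u u \<noteq> 0" if "u \<in> S" for u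
    using that assms(2) by (auto simp: cinner_self)
  have ci: "cinner u (\<i> *s v) = \<i> * cinner u v" "cinner (\<i> *s u) v = - \<i> * cinner u v"
    "cinner (\<i> *s u) (\<i> *s v) = cinner u v" for u v :: "complex^'n"
    by (simp_all add: cinner_smult_right cinner_smult_left)
  have reI: "Re (\<i> * cinner u u) = 0" for u :: "complex^'n"
    by (simp add: cinner_self)
  have reI2: "Re (- \<i> * cinner u u) = 0" for u :: "complex^'n"
    by (simp add: cinner_self)
  have po: "pairwise orthogonal T"
    unfolding pairwise_def orthogonal_def inner_cinner
  proof (intro ballI impI)
    fix x y assume x: "x \<in> T" and y: "y \<in> T" and xy: "x \<noteq> y"
    have co: "u \<in> S \<Longrightarrow> v \<in> S \<Longrightarrow> u \<noteq> v \<Longrightarrow> cinner u v = 0" for u v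
      using assms(1) unfolding corth_def by blast
    show "Re (cinner x y) = 0"
    proof (cases "x \<in> S")
      case True
      show ?thesis
      proof (cases "y \<in> S")
        case True
        then show ?thesis using co[OF \<open>x \<in> S\<close> True xy] by simp
      next
        case False
        then obtain v where v: "v \<in> S" "y = \<i> *s v" using y unfolding T_def by auto
        show ?thesis
        proof (cases "x = v")
          case True then show ?thesis using v by (simp only: ci reI)
        next
          case False then show ?thesis using v co[OF \<open>x \<in> S\<close> v(1) False] by (simp add: ci)
        qed
      qed
    next
      case False
      then obtain u where u: "u \<in> S" "x = \<i> *s u" using x unfolding T_def by auto
      show ?thesis
      proof (cases "y \<in> S")
        case True
        show ?thesis
        proof (cases "u = y")
          case True then show ?thesis using u by (simp only: ci reI2)
        next
          case False then show ?thesis using u co[OF u(1) \<open>y \<in> S\<close> False] by (simp add: ci)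
        qed
      next
        case False
        then obtain v where v: "v \<in> S" "y = \<i> *s v" using y unfolding T_def by auto
        have "u \<noteq> v" using u v xy by auto
        then show ?thesis using u v co[OF u(1) v(1)] by (simp add: ci)
      qed
    qed
  qed
  have z: "0 \<notin> T" using assms(2) unfolding T_def by (auto simp: vec_eq_iff) (metis vec_eq_iff zero_index)
  have ind: "independent T" by (rule pairwise_orthogonal_independent[OF po z])
  from independent_bound[OF ind] have fT: "finite T" and cT: "card T \<le> 2 * CARD('n)" by auto
  have fS: "finite S" using fT unfolding T_def by auto
  have disj: "S \<inter> (\<lambda>u. \<i> *s u) ` S = {}"
  proof (rule ccontr)
    assume "S \<inter> (\<lambda>u. \<i> *s u) ` S \<noteq> {}"
    then obtain u v where u: "u \<in> S" and v: "v \<in> S" and e: "u = \<i> *s v" by auto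
    have "cinner v u = \<i> * cinner v v" using e by (simp add: ci)
    moreover have "cinner v u = 0 \<or> u = v" using assms(1) u v unfolding corth_def by auto
    moreover have "u \<noteq> v"
    proof
      assume "u = v"
      then have "v = \<i> *s v" using e by simp
      then have "cinner v v = \<i> * cinner v v" by (metis ci(1))
      then have "cinner v v = 0" by (simp add: cinner_self complex_eq_iff)
      then show False using nz[OF v] by simp
    qed
    ultimately show False using nz[OF v] by auto
  qed
  have inj: "inj_on (\<lambda>u. \<i> *s u) S"
    by (rule inj_onI) (simp add: vec_eq_iff)
  have "card T = card S + card S"
    unfolding T_def using card_Un_disjoint[OF fS finite_imageI[OF fS] disj] card_image[OF inj] by simp
  then show ?thesis using cT fS by simp
qed



lemma qform_scale: "hermitian_mat A \<Longrightarrow> Re (qform A (a *s v)) = (cmod a)\<^sup>2 * Re (qform A v)"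
  using qform_expand[of A a v 0] by (simp add: qform_cinner)

lemma hermitian_id: "hermitian_mat (mat 1 :: complex^'n^'n)"
  unfolding hermitian_mat_def cmat_adj_def by (simp add: vec_eq_iff mat_def)

lemma norm_sq_qform: "(norm w)\<^sup>2 = Re (qform (mat 1) w)"
  by (simp add: qform_cinner Re_cinner_self)

lemma norm_expand: "(norm (a *s v + r))\<^sup>2 = (cmod a)\<^sup>2 * (norm v)\<^sup>2 + 2 * Re (cnj a * cinner v r) + (norm r)\<^sup>2"
  unfolding norm_sq_qform qform_expand[OF hermitian_id] by simp

lemma norm_smult: "(norm (a *s v))\<^sup>2 = (cmod a)\<^sup>2 * (norm v)\<^sup>2"
  using norm_expand[of a v 0] by simp

lemma continuous_qform: "continuous_on UNIV (\<lambda>w. Re (qform A w))"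
  unfolding qform_def by (intro continuous_intros)

lemma mat_zero_if: "(\<And>r. (X::complex^'n^'n) *v r = 0) \<Longrightarrow> X = 0"
  by (simp add: matrix_eq)

lemma psd_zero:
  assumes "psd_mat X" "\<And>w. Re (qform X w) = 0"
  shows "X = 0"
proof (rule mat_zero_if)
  fix r
  have "(cmod (cinner (X *v r) (X *v r)))\<^sup>2 \<le> 0"
    using psd_CS[OF assms(1), of "X *v r" r] assms(2) by simp
  then have "cinner (X *v r) (X *v r) = 0" by simp
  then show "X *v r = 0" by (simp add: cinner_self)
qed

lemma max_eig:
  fixes X :: "complex^'n^'n"
  assumes psd: "psd_mat X" and nz: "X \<noteq> 0"
  shows "\<exists>u l. norm u = 1 \<and> l > 0 \<and> X *v u = of_real l *s u \<and> Re (qform X u) = l"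
proof -
  have herm: "hermitian_mat X" using psd by (simp add: psd_mat_def)
  let ?f = "\<lambda>w. Re (qform X w)"
  have "\<exists>u\<in>sphere 0 1. \<forall>y\<in>sphere 0 1. ?f y \<le> ?f u"
    by (rule continuous_attains_sup[OF compact_sphere])
       (auto intro: continuous_on_subset[OF continuous_qform])
  then obtain u where u1: "norm u = 1" and umax: "\<And>y. norm y = 1 \<Longrightarrow> ?f y \<le> ?f u" by auto
  define l where "l = ?f u"
  have bound: "?f w \<le> l * (norm w)\<^sup>2" for w
  proof (cases "w = 0")
    case True then show ?thesis by (simp add: qform_def)
  next
    case False
    define y where "y = of_real (1 / norm w) *s w"
    have ny: "norm y = 1"
    proof -
      have "(norm y)\<^sup>2 = 1" unfolding y_def norm_smult using False
        by (simp add: power_divide norm_divide)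
      then show ?thesis by (smt (verit) power2_eq_1_iff norm_ge_zero)
    qed
    have w: "w = of_real (norm w) *s y" unfolding y_def using False
      by (simp add: vector_smult_assoc)
    have "?f w = (norm w)\<^sup>2 * ?f y" by (subst w, subst qform_scale[OF herm]) simp
    also have "\<dots> \<le> (norm w)\<^sup>2 * l" using umax[OF ny] unfolding l_def by (simp add: mult_left_mono)
    finally show ?thesis by (simp add: mult.commute)
  qed
  define D where "D = X *v u - of_real l *s u"
  define K where "K = ?f D - l * (norm D)\<^sup>2"
  define n where "n = (norm D)\<^sup>2"
  have cDD: "Re (cnj (of_real t) * cinner D (X *v u)) - l * Re (cnj (of_real t) * cinner D u) = t * n" for t
  proof -
    have "cinner D D = cinner D (X *v u) - of_real l * cinner D u"
      unfolding D_def by (simp add: cinner_diff_right cinner_smult_right)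
    then have "Re (cinner D (X *v u)) - l * Re (cinner D u) = n"
      unfolding n_def using Re_cinner_self[of D] by simp
    then show ?thesis by (simp add: algebra_simps)
  qed
  have ineq: "t\<^sup>2 * K + 2 * t * n \<le> 0" for t :: real
  proof -
    have "?f (of_real t *s D + u) \<le> l * (norm (of_real t *s D + u))\<^sup>2" by (rule bound)
    then have "t\<^sup>2 * ?f D + 2 * Re (cnj (of_real t) * cinner D (X *v u)) + l
        \<le> l * (t\<^sup>2 * n + 2 * Re (cnj (of_real t) * cinner D u) + 1)"
      unfolding qform_expand[OF herm] norm_expand n_def l_def using u1 by simp
    moreover have "l * (2 * (t * Re (cinner D u))) = 2 * (l * (t * Re (cinner D u)))"
       "l * (t\<^sup>2 * (norm D)\<^sup>2) = t\<^sup>2 * (l * (norm D)\<^sup>2)" by (simp_all add: mult_ac)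
    ultimately show ?thesis using cDD[of t] unfolding K_def n_def
      by (simp add: right_diff_distrib distrib_left)
  qed
  have n0: "n = 0"
  proof (rule ccontr)
    assume "n \<noteq> 0"
    then have np: "n > 0" unfolding n_def by simp
    define t where "t = n / (\<bar>K\<bar> + 1)"
    have tp: "t > 0" unfolding t_def using np by simp
    have "t * \<bar>K\<bar> < n" unfolding t_def using np by (simp add: field_simps)
    then have "t * (t * \<bar>K\<bar>) < t * n" using tp by simp
    moreover have "t\<^sup>2 * (- \<bar>K\<bar>) \<le> t\<^sup>2 * K"
      by (rule mult_left_mono) auto
    moreover have "t\<^sup>2 * (- \<bar>K\<bar>) = - (t * (t * \<bar>K\<bar>))" by (simp add: power2_eq_square)
    moreover have "0 < t * n" using tp np by simp
    ultimately have "0 < t\<^sup>2 * K + 2 * t * n" by linarith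
    then show False using ineq[of t] by simp
  qed
  then have D0: "D = 0" unfolding n_def by simp
  then have eig: "X *v u = of_real l *s u" unfolding D_def by simp
  have lpos: "l > 0"
  proof (rule ccontr)
    assume "\<not> l > 0"
    have "?f w = 0" for w
    proof -
      have "l * (norm w)\<^sup>2 \<le> 0" using \<open>\<not> l > 0\<close> by (simp add: mult_nonpos_nonneg)
      moreover have "0 \<le> ?f w" using psd unfolding psd_mat_def by blast
      ultimately show ?thesis using bound[of w] by linarith
    qed
    then have "X = 0" using psd_zero[OF psd] by blast
    then show False using nz by simp
  qed
  show ?thesis using u1 lpos eig l_def by blast
qed



lemma corth_subset: "corth T \<Longrightarrow> S \<subseteq> T \<Longrightarrow> corth S"
  unfolding corth_def by blast

lemma outer_scale: "outer (of_real (sqrt l) *s u) (of_real (sqrt l) *s u) = l *\<^sub>R outer u u" if "l \<ge> 0"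
proof -
  have e: "complex_of_real (sqrt l) * complex_of_real (sqrt l) = of_real l"
    using that by (simp flip: of_real_mult)
  show ?thesis unfolding outer_def vec_eq_iff
  proof (intro allI)
    fix i j
    have "of_real (sqrt l) * u $ i * cnj (of_real (sqrt l) * u $ j)
        = (complex_of_real (sqrt l) * complex_of_real (sqrt l)) * (u $ i * cnj (u $ j))"
      by (simp add: mult_ac)
    then show "(\<chi> i j. (of_real (sqrt l) *s u) $ i * cnj ((of_real (sqrt l) *s u) $ j)) $ i $ j =
        (l *\<^sub>R (\<chi> i j. u $ i * cnj (u $ j))) $ i $ j"
      unfolding e by (simp add: vector_scaleR_component scaleR_conv_of_real[where 'a=complex]
          del: scaleR_conv_of_real)
  qed
qed

lemma cinner_diff_left: "cinner (v - w) u = cinner v u - cinner w u"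
  by (simp add: cinner_def left_diff_distrib sum_subtractf)

lemma decomp_aux:
  "\<forall>(X::complex^'n^'n) U. CARD('n) - card U = m \<longrightarrow> psd_mat X \<longrightarrow> corth U \<longrightarrow> 0 \<notin> U \<longrightarrow>
     (\<forall>u\<in>U. X *v u = 0) \<longrightarrow>
     (\<exists>S. finite S \<and> corth (S \<union> U) \<and> 0 \<notin> S \<and> S \<inter> U = {} \<and> X = (\<Sum>v\<in>S. outer v v))"
proof (induction m rule: less_induct)
  case (less m)
  show ?case
  proof (intro allI impI)
    fix X :: "complex^'n^'n" and U
    assume m: "CARD('n) - card U = m" and psd: "psd_mat X" and cU: "corth U" and zU: "0 \<notin> U"
      and kill: "\<forall>u\<in>U. X *v u = 0"
    have herm: "hermitian_mat X" using psd by (simp add: psd_mat_def)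
    have fU: "finite U" using corth_card[OF cU zU] by simp
    show "\<exists>S. finite S \<and> corth (S \<union> U) \<and> 0 \<notin> S \<and> S \<inter> U = {} \<and> X = (\<Sum>v\<in>S. outer v v)"
    proof (cases "X = 0")
      case True
      then show ?thesis using cU by (intro exI[of _ "{}"]) simp
    next
      case False
      obtain u l where u1: "norm u = 1" and lp: "l > 0" and eig: "X *v u = of_real l *s u"
        and ql: "Re (qform X u) = l"
        using max_eig[OF psd False] by blast
      have cuu: "cinner u u = 1" using u1 by (simp add: cinner_self)
      have orthU: "cinner w u = 0" "cinner u w = 0" if "w \<in> U" for w
      proof -
        have "cinner w (X *v u) = cnj (cinner u (X *v w))" by (rule cinner_herm[OF herm])
        also have "\<dots> = 0" using kill that by simp
        finally have "of_real l * cinner w u = 0" unfolding eig cinner_smult_right .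
        then show "cinner w u = 0" using lp by simp
        then show "cinner u w = 0" by (metis cinner_cnj complex_cnj_zero)
      qed
      have uU: "u \<notin> U"
      proof
        assume "u \<in> U"
        then have "X *v u = 0" using kill by simp
        then have "of_real l *s u = 0" using eig by simp
        have "of_real l = of_real l * cinner u u" using cuu by simp
        also have "\<dots> = cinner u (of_real l *s u)" by (simp add: cinner_smult_right)
        also have "\<dots> = 0" unfolding \<open>of_real l *s u = 0\<close> by simp
        finally show False using lp by simp
      qed
      define U' where "U' = insert u U"
      have cU': "corth U'" unfolding U'_def corth_def using cU orthU unfolding corth_def by auto
      have zU': "0 \<notin> U'" unfolding U'_def using zU u1 by auto
      have cardU': "card U' = Suc (card U)" unfolding U'_def using fU uU by simp
      have "card U' \<le> CARD('n)" using corth_card[OF cU' zU'] by simp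
      then have mlt: "CARD('n) - card U' < m" using m cardU' by simp
      define X' where "X' = X - l *\<^sub>R outer u u"
      have qX': "Re (qform X' w) = Re (qform X w) - l * (cmod (cinner u w))\<^sup>2" for w
        unfolding X'_def qform_diff_scaleR qform_outer by simp
      have psd': "psd_mat X'"
        unfolding psd_mat_def
      proof
        show "hermitian_mat X'" unfolding X'_def by (rule hermitian_diff[OF herm hermitian_outer])
        show "\<forall>w. 0 \<le> Re (qform X' w)"
        proof
          fix w
          define a where "a = cinner u w"
          define r where "r = w - a *s u"
          have w: "w = a *s u + r" unfolding r_def by simp
          have cru: "cinner r u = 0"
          proof -
            have "cinner r u = cinner w u - cnj a * cinner u u"
              unfolding r_def by (simp add: cinner_diff_left cinner_smult_left)
            also have "\<dots> = cnj (cinner u w) - cnj a" using cuu by (metis cinner_cnj mult_1_right)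
            finally show ?thesis by (simp add: a_def)
          qed
          have cuXr: "cinner u (X *v r) = 0"
            using cinner_herm[OF herm, of u r] cru by (simp add: eig cinner_smult_right)
          have "Re (qform X w) = (cmod a)\<^sup>2 * l + Re (qform X r)"
            by (subst w, subst qform_expand[OF herm]) (simp add: ql cuXr)
          moreover have "0 \<le> Re (qform X r)" using psd by (simp add: psd_mat_def)
          ultimately show "0 \<le> Re (qform X' w)" unfolding qX' a_def by (simp add: mult.commute)
        qed
      qed
      have kill': "\<forall>w\<in>U'. X' *v w = 0"
      proof
        fix w assume "w \<in> U'"
        then consider "w = u" | "w \<in> U" unfolding U'_def by auto
        then show "X' *v w = 0"
        proof cases
          case 1 then show ?thesis unfolding X'_def mv_diff mv_scaleR mv_outer
            by (simp add: eig cuu)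
        next
          case 2 then show ?thesis unfolding X'_def mv_diff mv_scaleR mv_outer
            using kill orthU(2)[OF 2] by simp
        qed
      qed
      obtain S' where fS': "finite S'" and cS': "corth (S' \<union> U')" and zS': "0 \<notin> S'"
        and dS': "S' \<inter> U' = {}" and X'eq: "X' = (\<Sum>v\<in>S'. outer v v)"
        using less.IH[OF mlt, rule_format, OF refl psd' cU' zU' kill'[rule_format]] by blast
      define v0 where "v0 = of_real (sqrt l) *s u"
      have cv0: "cinner v0 x = of_real (sqrt l) * cinner u x" for x
        unfolding v0_def by (simp add: cinner_smult_left)
      have v0u: "cinner v0 u \<noteq> 0" using lp by (simp add: cv0 cuu)
      have orth0: "cinner v0 x = 0" if "x \<in> S' \<union> U" for x
      proof -
        have "x \<noteq> u" using that dS' uU unfolding U'_def by auto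
        moreover have "x \<in> S' \<union> U'" using that unfolding U'_def by auto
        moreover have "u \<in> S' \<union> U'" unfolding U'_def by auto
        ultimately have "cinner u x = 0" using cS' unfolding corth_def by metis
        then show ?thesis by (simp add: cv0)
      qed
      have "v0 \<notin> S' \<union> U"
      proof
        assume a: "v0 \<in> S' \<union> U"
        then have "cinner v0 v0 = 0" using orth0 by blast
        then have "v0 = 0" by (simp add: cinner_self)
        then show False using v0u by simp
      qed
      have Xeq: "X = (\<Sum>v\<in>insert v0 S'. outer v v)"
      proof -
        have "X = X' + l *\<^sub>R outer u u" unfolding X'_def by simp
        also have "l *\<^sub>R outer u u = outer v0 v0" unfolding v0_def using lp by (simp add: outer_scale)
        finally show ?thesis using \<open>v0 \<notin> S' \<union> U\<close> fS' X'eq by (simp add: add.commute)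
      qed
      have cS: "corth (insert v0 S' \<union> U)"
      proof -
        have c1: "corth (S' \<union> U)" using cS' unfolding U'_def by (rule corth_subset) auto
        show ?thesis unfolding corth_def
        proof (intro ballI impI)
          fix x y assume x: "x \<in> insert v0 S' \<union> U" and y: "y \<in> insert v0 S' \<union> U" and xy: "x \<noteq> y"
          show "cinner x y = 0"
          proof (cases "x = v0")
            case True then show ?thesis using y xy orth0 by auto
          next
            case False note xv = this
            show ?thesis
            proof (cases "y = v0")
              case True
              then have "cinner y x = 0" using x xv orth0 by auto
              then show ?thesis by (metis cinner_cnj complex_cnj_zero)
            next
              case False then show ?thesis using x y xy xv c1 unfolding corth_def by auto
            qed
          qed
        qed
      qed
      show ?thesis
        apply (rule exI[of _ "insert v0 S'"])
        using fS' cS zS' v0u dS' \<open>v0 \<notin> S' \<union> U\<close> Xeq unfolding U'_def by auto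
    qed
  qed
qed

lemma decomp:
  fixes X :: "complex^'n^'n"
  assumes "psd_mat X"
  shows "\<exists>S. finite S \<and> corth S \<and> X = (\<Sum>v\<in>S. outer v v)"
  using decomp_aux[rule_format, OF refl assms, of "{}"] by (auto simp: corth_def)



lemma trace_outer: "trace (H ** outer v v) = qform H v"
  unfolding trace_def matrix_matrix_mult_def outer_def qform_def
  by (simp add: sum_distrib_left sum_distrib_right mult_ac)

lemma trace_outer1: "trace (outer v v) = cinner v v"
  unfolding trace_def outer_def cinner_def by (simp add: mult.commute)

lemma trace_zero: "trace (0::complex^'n^'n) = 0"
  by (simp add: trace_def)

lemma trace_sum: "trace (\<Sum>v\<in>S. f v) = (\<Sum>v\<in>S. trace (f v :: complex^'n^'n))"
proof (induction S rule: infinite_finite_induct)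
  case (infinite A) then show ?case by (simp add: trace_zero)
next
  case empty then show ?case by (simp add: trace_zero)
next
  case (insert x F) then show ?case by (simp add: trace_add)
qed

lemma mmult_sum: "(H :: complex^'n^'n) ** (\<Sum>v\<in>S. f v) = (\<Sum>v\<in>S. H ** f v)"
  by (induction S rule: infinite_finite_induct) (auto simp: matrix_add_ldistrib)

lemma trace_HX:
  assumes "X = (\<Sum>v\<in>S. outer v v)"
  shows "Re (trace (H ** X)) = (\<Sum>v\<in>S. Re (qform H v))"
    and "Re (trace X) = (\<Sum>v\<in>S. (norm v)\<^sup>2)"
  unfolding assms mmult_sum trace_sum trace_outer trace_outer1 by (simp_all add: Re_cinner_self)

lemma norm_orth_sum:
  assumes "finite S" "corth S"
  shows "(norm (\<Sum>v\<in>S. c v *s v))\<^sup>2 = (\<Sum>v\<in>S. (cmod (c v))\<^sup>2 * (norm v)\<^sup>2)"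
proof -
  have "cinner (\<Sum>v\<in>S. c v *s v) (\<Sum>v\<in>S. c v *s v) = (\<Sum>u\<in>S. \<Sum>v\<in>S. cnj (c u) * c v * cinner u v)"
  proof -
    have a: "cinner (\<Sum>u\<in>S. c u *s u) w = (\<Sum>u\<in>S. cnj (c u) * cinner u w)" for w
      by (simp add: cinner_sum_left cinner_smult_left)
    have b: "cinner u (\<Sum>v\<in>S. c v *s v) = (\<Sum>v\<in>S. c v * cinner u v)" for u
      by (simp add: cinner_sum_right cinner_smult_right)
    have "cinner (\<Sum>u\<in>S. c u *s u) (\<Sum>v\<in>S. c v *s v) = (\<Sum>u\<in>S. cnj (c u) * cinner u (\<Sum>v\<in>S. c v *s v))"
      by (rule a)
    also have "\<dots> = (\<Sum>u\<in>S. cnj (c u) * (\<Sum>v\<in>S. c v * cinner u v))"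
      by (simp only: b)
    also have "\<dots> = (\<Sum>u\<in>S. \<Sum>v\<in>S. cnj (c u) * c v * cinner u v)"
      by (simp add: sum_distrib_left mult.assoc)
    finally show ?thesis .
  qed
  also have "\<dots> = (\<Sum>u\<in>S. cnj (c u) * c u * cinner u u)"
  proof (rule sum.cong[OF refl])
    fix u assume u: "u \<in> S"
    have "(\<Sum>v\<in>S. cnj (c u) * c v * cinner u v) = (\<Sum>v\<in>{u}. cnj (c u) * c v * cinner u v)"
    proof (rule sum.mono_neutral_right)
      show "finite S" by (rule assms(1))
      show "{u} \<subseteq> S" using u by simp
      show "\<forall>i\<in>S - {u}. cnj (c u) * c i * cinner u i = 0"
        using assms(2) u unfolding corth_def by auto
    qed
    then show "(\<Sum>v\<in>S. cnj (c u) * c v * cinner u v) = cnj (c u) * c u * cinner u u" by simp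
  qed
  also have "\<dots> = of_real (\<Sum>u\<in>S. (cmod (c u))\<^sup>2 * (norm u)\<^sup>2)"
    by (simp add: cnj_mult_self cinner_self)
  finally have "cinner (\<Sum>v\<in>S. c v *s v) (\<Sum>v\<in>S. c v *s v) = of_real (\<Sum>u\<in>S. (cmod (c u))\<^sup>2 * (norm u)\<^sup>2)" .
  then have "Re (cinner (\<Sum>v\<in>S. c v *s v) (\<Sum>v\<in>S. c v *s v)) = (\<Sum>u\<in>S. (cmod (c u))\<^sup>2 * (norm u)\<^sup>2)"
    by (simp only: Re_complex_of_real)
  then show ?thesis by (simp only: Re_cinner_self)
qed



definition nd :: "real \<Rightarrow> real" where "nd x = exp (- (x\<^sup>2)) / sqrt pi"

definition G :: "complex measure" where
  "G = distr (density (lborel \<Otimes>\<^sub>M lborel) (\<lambda>p. ennreal (nd (fst p) * nd (snd p)))) borel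
      (\<lambda>p. complex_of_real (fst p) + \<i> * complex_of_real (snd p))"

lemma nn_integral_normal_density:
  assumes "0 < \<sigma>" shows "(\<integral>\<^sup>+x. ennreal (normal_density \<mu> \<sigma> x) \<partial>lborel) = 1"
proof -
  interpret prob_space "density lborel (normal_density \<mu> \<sigma>)"
    by (rule prob_space_normal_density[OF assms])
  have "emeasure (density lborel (normal_density \<mu> \<sigma>)) UNIV = 1"
    using emeasure_space_1 by simp
  then show ?thesis by (simp add: emeasure_density)
qed

lemma aux_frac: "s > 0 \<Longrightarrow> (A::real) / s * (s / p) * B = A * B / p"
  by (simp add: field_simps)

lemma nd_shift:
  assumes c: "0 < c"
  shows "nd x * exp (- ((c - 1) * x\<^sup>2 + 2 * b * x))
       = exp (b\<^sup>2 / c) / sqrt c * normal_density (- b / c) (sqrt (1 / (2 * c))) x"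
proof -
  have s2: "(sqrt (1 / (2 * c)))\<^sup>2 = 1 / (2 * c)" using c by simp
  have sq: "sqrt (2 * pi * (1 / (2 * c))) = sqrt pi / sqrt c"
    using c by (simp add: real_sqrt_divide)
  have ex: "- (x - - b / c)\<^sup>2 / (2 * (sqrt (1 / (2 * c)))\<^sup>2) = - (c * x\<^sup>2 + 2 * b * x + b\<^sup>2 / c)"
    unfolding s2 using c by (simp add: field_simps power2_eq_square)
  have nd_eq: "normal_density (- b / c) (sqrt (1 / (2 * c))) x = 1 / (sqrt pi / sqrt c) * exp (- (c * x\<^sup>2 + 2 * b * x + b\<^sup>2 / c))"
    unfolding normal_density_def ex unfolding s2 sq ..
  have "exp (b\<^sup>2 / c) / sqrt c * normal_density (- b / c) (sqrt (1 / (2 * c))) x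
      = exp (b\<^sup>2 / c) / sqrt c * (sqrt c / sqrt pi) * exp (- (c * x\<^sup>2 + 2 * b * x + b\<^sup>2 / c))"
    unfolding nd_eq by simp
  also have "\<dots> = exp (b\<^sup>2 / c) * exp (- (c * x\<^sup>2 + 2 * b * x + b\<^sup>2 / c)) / sqrt pi"
    using c by (simp add: aux_frac)
  also have "\<dots> = exp (b\<^sup>2 / c + - (c * x\<^sup>2 + 2 * b * x + b\<^sup>2 / c)) / sqrt pi"
    by (simp only: exp_add)
  also have "b\<^sup>2 / c + - (c * x\<^sup>2 + 2 * b * x + b\<^sup>2 / c) = - (x\<^sup>2) + - ((c - 1) * x\<^sup>2 + 2 * b * x)"
    by (simp add: algebra_simps)
  also have "exp \<dots> / sqrt pi = nd x * exp (- ((c - 1) * x\<^sup>2 + 2 * b * x))"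
    unfolding nd_def exp_add by simp
  finally show ?thesis ..
qed

lemma gauss1:
  assumes c: "0 < c"
  shows "(\<integral>\<^sup>+x. ennreal (nd x * exp (- ((c - 1) * x\<^sup>2 + 2 * b * x))) \<partial>lborel)
       = ennreal (exp (b\<^sup>2 / c) / sqrt c)"
proof -
  have "(\<integral>\<^sup>+x. ennreal (nd x * exp (- ((c - 1) * x\<^sup>2 + 2 * b * x))) \<partial>lborel)
      = (\<integral>\<^sup>+x. ennreal (exp (b\<^sup>2 / c) / sqrt c) * ennreal (normal_density (- b / c) (sqrt (1 / (2 * c))) x) \<partial>lborel)"
    unfolding nd_shift[OF c] using c
    by (intro nn_integral_cong, subst ennreal_mult[symmetric]) (simp_all add: normal_density_nonneg)
  also have "\<dots> = ennreal (exp (b\<^sup>2 / c) / sqrt c) * (\<integral>\<^sup>+x. ennreal (normal_density (- b / c) (sqrt (1 / (2 * c))) x) \<partial>lborel)"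
    by (rule nn_integral_cmult) simp
  also have "\<dots> = ennreal (exp (b\<^sup>2 / c) / sqrt c)"
    using c by (simp add: nn_integral_normal_density)
  finally show ?thesis .
qed

lemma nd_nonneg: "0 \<le> nd x" by (simp add: nd_def)

lemma gaussG:
  assumes a: "a > -1"
  shows "(\<integral>\<^sup>+z. ennreal (exp (- (a * (cmod z)\<^sup>2 + 2 * Re (cnj z * b)))) \<partial>G)
       = ennreal (exp ((cmod b)\<^sup>2 / (1 + a)) / (1 + a))"
proof -
  define c where "c = 1 + a"
  have c: "0 < c" using a by (simp add: c_def)
  have am: "a = c - 1" by (simp add: c_def)
  define g where "g = (\<lambda>bb x. nd x * exp (- ((c - 1) * x\<^sup>2 + 2 * bb * x)))"
  have gnn: "0 \<le> g bb x" for bb x by (simp add: g_def nd_nonneg)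
  have meas: "(\<lambda>p. complex_of_real (fst p) + \<i> * complex_of_real (snd p))
      \<in> measurable (density (lborel \<Otimes>\<^sub>M lborel) (\<lambda>p. ennreal (nd (fst p) * nd (snd p)))) borel"
    by simp
  have pt: "ennreal (nd (fst p) * nd (snd p)) *
      ennreal (exp (- (a * (cmod (complex_of_real (fst p) + \<i> * complex_of_real (snd p)))\<^sup>2
         + 2 * Re (cnj (complex_of_real (fst p) + \<i> * complex_of_real (snd p)) * b))))
      = ennreal (g (Re b) (fst p)) * ennreal (g (Im b) (snd p))" for p
  proof -
    have "(cmod (complex_of_real (fst p) + \<i> * complex_of_real (snd p)))\<^sup>2 = (fst p)\<^sup>2 + (snd p)\<^sup>2"
      by (simp add: cmod_power2)
    moreover have "Re (cnj (complex_of_real (fst p) + \<i> * complex_of_real (snd p)) * b) = fst p * Re b + snd p * Im b"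
      by simp
    ultimately show ?thesis unfolding g_def am
      by (simp add: ennreal_mult[symmetric] nd_nonneg exp_add[symmetric] algebra_simps)
  qed
  have "(\<integral>\<^sup>+z. ennreal (exp (- (a * (cmod z)\<^sup>2 + 2 * Re (cnj z * b)))) \<partial>G)
     = (\<integral>\<^sup>+p. ennreal (g (Re b) (fst p)) * ennreal (g (Im b) (snd p)) \<partial>(lborel \<Otimes>\<^sub>M lborel))"
    unfolding G_def
  proof (subst nn_integral_distr[OF meas])
    show "(\<lambda>z. ennreal (exp (- (a * (cmod z)\<^sup>2 + 2 * Re (cnj z * b)))))
        \<in> borel_measurable (distr (density (lborel \<Otimes>\<^sub>M lborel) (\<lambda>p. ennreal (nd (fst p) * nd (snd p)))) borel
      (\<lambda>p. complex_of_real (fst p) + \<i> * complex_of_real (snd p)))" by simp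
    show "(\<integral>\<^sup>+ x. ennreal (exp (- (a * (cmod (complex_of_real (fst x) + \<i> * complex_of_real (snd x)))\<^sup>2 +
                2 * Re (cnj (complex_of_real (fst x) + \<i> * complex_of_real (snd x)) * b))))
       \<partial>density (lborel \<Otimes>\<^sub>M lborel) (\<lambda>p. ennreal (nd (fst p) * nd (snd p)))) =
      (\<integral>\<^sup>+p. ennreal (g (Re b) (fst p)) * ennreal (g (Im b) (snd p)) \<partial>(lborel \<Otimes>\<^sub>M lborel))"
    proof -
      have m1: "(\<lambda>p. ennreal (nd (fst p) * nd (snd p))) \<in> borel_measurable (lborel \<Otimes>\<^sub>M lborel)"
        by (simp add: nd_def)
      show ?thesis
        by (subst nn_integral_density[OF m1]) (simp, intro nn_integral_cong pt)
    qed
  qed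
  also have "\<dots> = (\<integral>\<^sup>+x. \<integral>\<^sup>+y. ennreal (g (Re b) x) * ennreal (g (Im b) y) \<partial>lborel \<partial>lborel)"
    by (subst lborel.nn_integral_fst[symmetric]) (simp_all add: g_def nd_def)
  also have "\<dots> = (\<integral>\<^sup>+x. ennreal (g (Re b) x) * (\<integral>\<^sup>+y. ennreal (g (Im b) y) \<partial>lborel) \<partial>lborel)"
    by (rule nn_integral_cong) (rule nn_integral_cmult, simp add: g_def nd_def)
  also have "\<dots> = (\<integral>\<^sup>+x. ennreal (g (Re b) x) \<partial>lborel) * (\<integral>\<^sup>+y. ennreal (g (Im b) y) \<partial>lborel)"
    by (rule nn_integral_multc) (simp add: g_def nd_def)
  also have "\<dots> = ennreal (exp ((Re b)\<^sup>2 / c) / sqrt c) * ennreal (exp ((Im b)\<^sup>2 / c) / sqrt c)"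
    unfolding g_def gauss1[OF c] ..
  also have "\<dots> = ennreal (exp ((cmod b)\<^sup>2 / (1 + a)) / (1 + a))"
  proof -
    have "exp ((Re b)\<^sup>2 / c) / sqrt c * (exp ((Im b)\<^sup>2 / c) / sqrt c) = exp ((cmod b)\<^sup>2 / c) / c"
      using c by (simp add: cmod_power2 exp_add[symmetric] add_divide_distrib)
    then show ?thesis using c by (simp add: ennreal_mult[symmetric] c_def)
  qed
  finally show ?thesis .
qed

lemma prob_space_G: "prob_space G"
proof
  have "emeasure G (space G) = (\<integral>\<^sup>+z. 1 \<partial>G)" by simp
  also have "\<dots> = (\<integral>\<^sup>+z. ennreal (exp (- (0 * (cmod z)\<^sup>2 + 2 * Re (cnj z * 0)))) \<partial>G)" by simp
  also have "\<dots> = 1" by (subst gaussG) simp_all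
  finally show "emeasure G (space G) = 1" .
qed

lemma space_G[simp]: "space G = UNIV" by (simp add: G_def)
lemma sets_G[simp]: "sets G = sets borel" by (simp add: G_def)



definition wI :: "(complex^'n) set \<Rightarrow> (complex^'n \<Rightarrow> complex) \<Rightarrow> complex^'n" where
  "wI I \<xi> = (\<Sum>v\<in>I. \<xi> v *s v)"

definition NI :: "(complex^'n) set \<Rightarrow> (complex^'n \<Rightarrow> complex) \<Rightarrow> real" where
  "NI I \<xi> = (\<Sum>v\<in>I. (cmod (\<xi> v))\<^sup>2 * (norm v)\<^sup>2)"

definition FF :: "real \<Rightarrow> real \<Rightarrow> complex^'n^'n \<Rightarrow> (complex^'n) set \<Rightarrow> (complex^'n \<Rightarrow> complex) \<Rightarrow> real" where
  "FF l m H I \<xi> = exp (- l * Re (qform H (wI I \<xi>)) + m * NI I \<xi>)"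

lemma sigma_finite_G: "sigma_finite_measure G"
  using prob_space_G by (simp add: prob_space_imp_sigma_finite)

lemma psf: "product_sigma_finite (\<lambda>_::complex^'n. G)"
  unfolding product_sigma_finite_def using sigma_finite_G by simp

lemma meas_smult: "(\<lambda>z::complex. z *s u) \<in> borel_measurable G"
proof -
  have "continuous_on UNIV (\<lambda>z::complex. z *s u)"
    unfolding vector_scalar_mult_def by (intro continuous_intros)
  then have "(\<lambda>z::complex. z *s u) \<in> borel_measurable borel"
    by (rule borel_measurable_continuous_onI)
  then show ?thesis by (simp add: measurable_cong_sets[OF sets_G refl])
qed

lemma meas_wI:
  assumes "I \<subseteq> J"
  shows "wI I \<in> borel_measurable (PiM J (\<lambda>_. G))"
  unfolding wI_def
proof (rule borel_measurable_sum)
  fix v assume "v \<in> I"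
  then have vJ: "v \<in> J" using assms by auto
  show "(\<lambda>\<xi>. \<xi> v *s v) \<in> borel_measurable (PiM J (\<lambda>_. G))"
    using measurable_comp[OF measurable_component_singleton[OF vJ] meas_smult[of v]]
    by (simp add: comp_def)
qed

lemma meas_NI:
  assumes "I \<subseteq> J"
  shows "NI I \<in> borel_measurable (PiM J (\<lambda>_. G))"
  unfolding NI_def
proof (rule borel_measurable_sum)
  fix v assume "v \<in> I"
  then have vJ: "v \<in> J" using assms by auto
  have "(\<lambda>z::complex. (cmod z)\<^sup>2 * (norm v)\<^sup>2) \<in> borel_measurable G"
    by (simp add: measurable_cong_sets[OF sets_G refl])
  from measurable_comp[OF measurable_component_singleton[OF vJ] this]
  show "(\<lambda>\<xi>. (cmod (\<xi> v))\<^sup>2 * (norm v)\<^sup>2) \<in> borel_measurable (PiM J (\<lambda>_. G))"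
    by (simp add: comp_def)
qed

lemma meas_qform: "(\<lambda>w. Re (qform H w)) \<in> borel_measurable borel"
  by (rule borel_measurable_continuous_onI[OF continuous_qform])

lemma meas_FF:
  assumes "I \<subseteq> J"
  shows "(\<lambda>\<xi>. ennreal (FF l m H I \<xi>)) \<in> borel_measurable (PiM J (\<lambda>_. G))"
proof -
  have q: "(\<lambda>\<xi>. Re (qform H (wI I \<xi>))) \<in> borel_measurable (PiM J (\<lambda>_. G))"
    using measurable_comp[OF meas_wI[OF assms] meas_qform] by (simp add: comp_def)
  show ?thesis unfolding FF_def using q meas_NI[OF assms] by measurable
qed

lemma key_ineq:
  fixes P l m h t t' x :: real
  assumes P: "P > 0" and l: "0 \<le> l" and m: "0 \<le> m" and h: "0 \<le> h" and t: "0 \<le> t"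
    and mx: "m * x < 1" and x: "0 \<le> x"
    and t': "t' \<ge> (1 - l / (1 + (l * h - m * x)) * h) * t"
  shows "1 / (1 + (l * h - m * x)) * (1 / (P * (1 + l * t'))) \<le> 1 / ((1 - m * x) * P * (1 + l * (h + t)))"
proof -
  define a where "a = l * h - m * x"
  have a1: "1 + a > 0"
  proof -
    have "0 \<le> l * h" using l h by simp
    then show ?thesis unfolding a_def using mx by linarith
  qed
  have fac: "(1 + a) * (1 - l / (1 + a) * h) = 1 - m * x"
    using a1 unfolding a_def by (simp add: field_simps)
  have chle: "l / (1 + a) * h \<le> 1"
  proof -
    have "l * h \<le> 1 + a" unfolding a_def using mx by simp
    then show ?thesis using a1 by (simp add: field_simps)
  qed
  have t'0: "(1 - l / (1 + a) * h) * t \<ge> 0" using chle t by simp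
  have t'pos: "t' \<ge> 0" using t' t'0 unfolding a_def by linarith
  have lt': "l * t' \<ge> l * ((1 - l / (1 + a) * h) * t)" using t' l unfolding a_def by (simp add: mult_left_mono)
  have A: "(1 + a) * (1 + l * t') \<ge> (1 + a) + l * (1 - m * x) * t"
  proof -
    have "(1 + a) * (1 + l * t') \<ge> (1 + a) * (1 + l * ((1 - l / (1 + a) * h) * t))"
      using lt' a1 by (simp add: mult_left_mono)
    also have "(1 + a) * (1 + l * ((1 - l / (1 + a) * h) * t)) = (1 + a) + l * ((1 + a) * (1 - l / (1 + a) * h)) * t"
      by (simp add: algebra_simps)
    finally show ?thesis unfolding fac .
  qed
  have B: "(1 - m * x) * (1 + l * (h + t)) \<le> (1 + a) + l * (1 - m * x) * t"
  proof -
    have "(1 - m * x) * (1 + l * (h + t)) = 1 + l * h - m * x - m * x * (l * h) + l * (1 - m * x) * t"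
      by (simp add: algebra_simps)
    moreover have "0 \<le> m * x * (l * h)" using m l h x by simp
    ultimately show ?thesis unfolding a_def by linarith
  qed
  have pos1: "(1 - m * x) * (1 + l * (h + t)) > 0" using mx l h t by (simp add: add_pos_nonneg)
  have pos2: "(1 + a) * (1 + l * t') > 0" using a1 t'pos l by (simp add: add_pos_nonneg)
  have "(1 - m * x) * P * (1 + l * (h + t)) \<le> (1 + a) * (P * (1 + l * t'))"
  proof -
    have "(1 - m * x) * (1 + l * (h + t)) \<le> (1 + a) * (1 + l * t')" using A B by linarith
    then have "P * ((1 - m * x) * (1 + l * (h + t))) \<le> P * ((1 + a) * (1 + l * t'))"
      using P by (simp add: mult_left_mono)
    then show ?thesis by (simp add: mult_ac)
  qed
  moreover have "(1 - m * x) * P * (1 + l * (h + t)) > 0" using pos1 P by (simp add: mult_ac)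
  ultimately have "1 / ((1 + a) * (P * (1 + l * t'))) \<le> 1 / ((1 - m * x) * P * (1 + l * (h + t)))"
    using frac_le[of 1 1 "(1 - m * x) * P * (1 + l * (h + t))" "(1 + a) * (P * (1 + l * t'))"] by simp
  then show ?thesis unfolding a_def by simp
qed



lemma wI_insert:
  assumes "v \<notin> I" "finite I"
  shows "wI (insert v I) (\<xi>(v := y)) = y *s v + wI I \<xi>"
proof -
  have "(\<Sum>u\<in>I. (\<xi>(v := y)) u *s u) = (\<Sum>u\<in>I. \<xi> u *s u)"
    using assms(1) by (intro sum.cong) auto
  then show ?thesis unfolding wI_def using assms by simp
qed

lemma NI_insert:
  assumes "v \<notin> I" "finite I"
  shows "NI (insert v I) (\<xi>(v := y)) = (cmod y)\<^sup>2 * (norm v)\<^sup>2 + NI I \<xi>"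
proof -
  have "(\<Sum>u\<in>I. (cmod ((\<xi>(v := y)) u))\<^sup>2 * (norm u)\<^sup>2) = (\<Sum>u\<in>I. (cmod (\<xi> u))\<^sup>2 * (norm u)\<^sup>2)"
    using assms(1) by (intro sum.cong) auto
  then show ?thesis unfolding NI_def using assms by simp
qed

lemma rec_bound:
  fixes l m :: real
  assumes l: "0 \<le> l" and m: "0 \<le> m"
  shows "finite I \<Longrightarrow> (\<forall>v\<in>I. m * (norm v)\<^sup>2 < 1) \<Longrightarrow> psd_mat H \<Longrightarrow>
    (\<integral>\<^sup>+\<xi>. ennreal (FF l m H I \<xi>) \<partial>PiM I (\<lambda>_. G))
      \<le> ennreal (1 / ((\<Prod>v\<in>I. 1 - m * (norm v)\<^sup>2) * (1 + l * (\<Sum>v\<in>I. Re (qform H v)))))"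
proof (induction I arbitrary: H rule: finite_induct)
  case empty
  interpret product_sigma_finite "\<lambda>_::complex^'n. G" by (rule psf)
  have "FF l m H {} (\<lambda>k. undefined) = 1" by (simp add: FF_def wI_def NI_def qform_def)
  then show ?case by (subst nn_integral_empty) simp_all
next
  case (insert v I H)
  interpret product_sigma_finite "\<lambda>_::complex^'n. G" by (rule psf)
  have herm: "hermitian_mat H" using insert.prems(2) by (simp add: psd_mat_def)
  define x where "x = (norm v)\<^sup>2"
  define h where "h = Re (qform H v)"
  define a where "a = l * h - m * x"
  define c where "c = l / (1 + a)"
  define H' where "H' = H - c *\<^sub>R outer (H *v v) (H *v v)"
  have mx: "m * x < 1" using insert.prems(1) unfolding x_def by simp
  have h0: "0 \<le> h" using insert.prems(2) unfolding h_def psd_mat_def by simp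
  have x0: "0 \<le> x" unfolding x_def by simp
  have a1: "1 + a > 0"
  proof -
    have "0 \<le> l * h" using l h0 by simp
    then show ?thesis unfolding a_def using mx by linarith
  qed
  have c0: "0 \<le> c" unfolding c_def using l a1 by simp
  have ch: "c * h \<le> 1"
  proof -
    have "l * h \<le> 1 + a" unfolding a_def using mx m x0 by (simp add: mult_nonneg_nonneg)
    then show ?thesis unfolding c_def using a1 by (simp add: field_simps)
  qed
  have psdH': "psd_mat H'" unfolding H'_def
    by (rule psd_update(1)[OF insert.prems(2) c0]) (use ch in \<open>simp add: h_def\<close>)
  have inner: "(\<integral>\<^sup>+y. ennreal (FF l m H (insert v I) (\<xi>(v := y))) \<partial>G)
      = ennreal (1 / (1 + a)) * ennreal (FF l m H' I \<xi>)" for \<xi>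
  proof -
    define r where "r = wI I \<xi>"
    define b0 where "b0 = cinner v (H *v r)"
    define E where "E = - l * Re (qform H r) + m * NI I \<xi>"
    have eqF: "FF l m H (insert v I) (\<xi>(v := y))
        = exp (- (a * (cmod y)\<^sup>2 + 2 * Re (cnj y * (of_real l * b0)))) * exp E" for y
    proof -
      have "FF l m H (insert v I) (\<xi>(v := y)) =
          exp (- l * ((cmod y)\<^sup>2 * h + 2 * Re (cnj y * b0) + Re (qform H r)) + m * ((cmod y)\<^sup>2 * x + NI I \<xi>))"
        unfolding FF_def wI_insert[OF insert.hyps(2,1)] NI_insert[OF insert.hyps(2,1)]
          qform_expand[OF herm] h_def x_def b0_def r_def ..
      also have "\<dots> = exp (- (a * (cmod y)\<^sup>2 + 2 * Re (cnj y * (of_real l * b0))) + E)"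
        unfolding a_def E_def by (simp add: algebra_simps)
      finally show ?thesis by (simp add: exp_add)
    qed
    have "(\<integral>\<^sup>+y. ennreal (FF l m H (insert v I) (\<xi>(v := y))) \<partial>G)
        = (\<integral>\<^sup>+y. ennreal (exp (- (a * (cmod y)\<^sup>2 + 2 * Re (cnj y * (of_real l * b0))))) * ennreal (exp E) \<partial>G)"
      unfolding eqF by (simp add: ennreal_mult)
    also have "\<dots> = (\<integral>\<^sup>+y. ennreal (exp (- (a * (cmod y)\<^sup>2 + 2 * Re (cnj y * (of_real l * b0))))) \<partial>G) * ennreal (exp E)"
      by (rule nn_integral_multc) (simp add: measurable_cong_sets[OF sets_G refl])
    also have "\<dots> = ennreal (exp ((cmod (of_real l * b0))\<^sup>2 / (1 + a)) / (1 + a)) * ennreal (exp E)"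
      using a1 by (subst gaussG) simp_all
    also have "\<dots> = ennreal (1 / (1 + a)) * ennreal (FF l m H' I \<xi>)"
    proof -
      have q': "Re (qform H' r) = Re (qform H r) - c * (cmod b0)\<^sup>2"
        unfolding H'_def b0_def by (rule psd_update(2)[OF insert.prems(2) c0]) (use ch in \<open>simp add: h_def\<close>)
      have "(cmod (of_real l * b0))\<^sup>2 / (1 + a) + E = - l * Re (qform H' r) + m * NI I \<xi>"
        unfolding q' E_def c_def using l by (simp add: norm_mult power_mult_distrib power2_eq_square field_simps)
      then have "exp ((cmod (of_real l * b0))\<^sup>2 / (1 + a)) * exp E = FF l m H' I \<xi>"
        unfolding FF_def r_def by (simp add: exp_add[symmetric])
      note eqx = this
      have F0: "0 \<le> FF l m H' I \<xi>" by (simp add: FF_def)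
      have "ennreal (exp ((cmod (of_real l * b0))\<^sup>2 / (1 + a)) / (1 + a)) * ennreal (exp E)
          = ennreal (exp ((cmod (of_real l * b0))\<^sup>2 / (1 + a)) / (1 + a) * exp E)"
        by (rule ennreal_mult[symmetric]) (use a1 in auto)
      also have "exp ((cmod (of_real l * b0))\<^sup>2 / (1 + a)) / (1 + a) * exp E = 1 / (1 + a) * FF l m H' I \<xi>"
        unfolding eqx[symmetric] by simp
      also have "ennreal (1 / (1 + a) * FF l m H' I \<xi>) = ennreal (1 / (1 + a)) * ennreal (FF l m H' I \<xi>)"
        by (rule ennreal_mult) (use a1 F0 in auto)
      finally show ?thesis .
    qed
    finally show ?thesis .
  qed
  have "(\<integral>\<^sup>+\<xi>. ennreal (FF l m H (insert v I) \<xi>) \<partial>PiM (insert v I) (\<lambda>_. G))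
      = (\<integral>\<^sup>+\<xi>. (\<integral>\<^sup>+y. ennreal (FF l m H (insert v I) (\<xi>(v := y))) \<partial>G) \<partial>PiM I (\<lambda>_. G))"
    by (rule product_nn_integral_insert[OF insert.hyps(1,2) meas_FF]) simp
  also have "\<dots> = (\<integral>\<^sup>+\<xi>. ennreal (1 / (1 + a)) * ennreal (FF l m H' I \<xi>) \<partial>PiM I (\<lambda>_. G))"
    unfolding inner ..
  also have "\<dots> = ennreal (1 / (1 + a)) * (\<integral>\<^sup>+\<xi>. ennreal (FF l m H' I \<xi>) \<partial>PiM I (\<lambda>_. G))"
    by (rule nn_integral_cmult) (rule meas_FF, simp)
  also have "\<dots> \<le> ennreal (1 / (1 + a)) *
      ennreal (1 / ((\<Prod>u\<in>I. 1 - m * (norm u)\<^sup>2) * (1 + l * (\<Sum>u\<in>I. Re (qform H' u)))))"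
    using insert.IH[OF _ psdH'] insert.prems(1) by (intro mult_left_mono) auto
  also have "\<dots> \<le> ennreal (1 / ((\<Prod>u\<in>insert v I. 1 - m * (norm u)\<^sup>2) * (1 + l * (\<Sum>u\<in>insert v I. Re (qform H u)))))"
  proof -
    define P where "P = (\<Prod>u\<in>I. 1 - m * (norm u)\<^sup>2)"
    define t where "t = (\<Sum>u\<in>I. Re (qform H u))"
    define t' where "t' = (\<Sum>u\<in>I. Re (qform H' u))"
    have P0: "P > 0" unfolding P_def using insert.prems(1) by (intro prod_pos) auto
    have t0: "0 \<le> t" unfolding t_def using insert.prems(2) by (intro sum_nonneg) (simp add: psd_mat_def)
    have tt': "t' \<ge> (1 - c * h) * t"
    proof -
      have "(\<Sum>u\<in>I. (1 - c * h) * Re (qform H u)) \<le> t'"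
        unfolding t'_def H'_def h_def
        by (intro sum_mono psd_update(3)[OF insert.prems(2) c0]) (use ch in \<open>simp add: h_def\<close>)
      then show ?thesis unfolding t_def by (simp add: sum_distrib_left)
    qed
    have ki: "1 / (1 + (l * h - m * x)) * (1 / (P * (1 + l * t'))) \<le> 1 / ((1 - m * x) * P * (1 + l * (h + t)))"
      by (rule key_ineq[OF P0 l m h0 t0 mx x0]) (use tt' in \<open>simp add: c_def a_def\<close>)
    have "ennreal (1 / (1 + a)) * ennreal (1 / (P * (1 + l * t'))) = ennreal (1 / (1 + a) * (1 / (P * (1 + l * t'))))"
    proof (rule ennreal_mult[symmetric])
      show "0 \<le> 1 / (1 + a)" using a1 by simp
      have "0 \<le> (1 - c * h) * t" using ch t0 by simp
      then have "0 \<le> t'" using tt' by linarith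
      then have "0 \<le> l * t'" using l by simp
      then show "0 \<le> 1 / (P * (1 + l * t'))" using P0 by simp
    qed
    also have "\<dots> \<le> ennreal (1 / ((1 - m * x) * P * (1 + l * (h + t))))"
      using ki unfolding a_def by (rule ennreal_leI)
    finally show ?thesis
      unfolding P_def t_def t'_def using insert.hyps by (simp add: x_def h_def mult_ac)
  qed
  finally show ?case .
qed



lemma select:
  fixes M Q :: nat and \<epsilon> :: real and \<beta> t :: "nat \<Rightarrow> real"
  assumes M: "M \<ge> 2" and Q1: "1 \<le> Q" and QM: "Q \<le> M - 1" and e0: "0 < \<epsilon>" and e1: "\<epsilon> < 1"
    and b: "\<forall>i<M. 0 \<le> \<beta> i \<and> \<beta> i \<le> 1" and bs: "(\<Sum>i<M. \<beta> i) = real Q"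
    and tb: "\<forall>i<M. t i \<ge> \<beta> i + (1 - \<beta> i) * \<epsilon>"
  shows "\<exists>Sel. Sel \<subseteq> {..<M} \<and> card Sel = Q \<and> (\<forall>i\<in>Sel. t i \<ge> c_eps M Q \<epsilon>)"
proof -
  define c where "c = c_eps M Q \<epsilon>"
  define k where "k = real M - real Q + 1"
  have k1: "k \<ge> 2" unfolding k_def using QM M by linarith
  have cdef: "c = \<epsilon> + (1 - \<epsilon>) / k" unfolding c_def c_eps_def k_def ..
  define A where "A = {i\<in>{..<M}. t i \<ge> c}"
  have fA: "finite A" unfolding A_def by simp
  show ?thesis
  proof (cases "Q \<le> card A")
    case True
    then obtain Sel where "Sel \<subseteq> A" "card Sel = Q" by (metis obtain_subset_with_card_n)
    then show ?thesis unfolding A_def c_def by auto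
  next
    case False
    then have aQ: "card A \<le> Q - 1" by simp
    define B where "B = {..<M} - A"
    have AB: "{..<M} = A \<union> B" "A \<inter> B = {}" unfolding A_def B_def by auto
    have cardB: "card B = M - card A" unfolding B_def using fA
      by (metis A_def card_Diff_subset card_lessThan mem_Collect_eq subsetI)
    have "card B > 0" using cardB aQ QM M by linarith
    then have Bne: "B \<noteq> {}" by auto
    have bB: "\<beta> i < 1 / k" if "i \<in> B" for i
    proof -
      have i: "i < M" "\<not> t i \<ge> c" using that unfolding B_def A_def by auto
      then have "\<beta> i + (1 - \<beta> i) * \<epsilon> < \<epsilon> + (1 - \<epsilon>) / k" using tb cdef by force
      then have "\<beta> i * (1 - \<epsilon>) < (1 - \<epsilon>) / k" by (simp add: algebra_simps)
      then have "\<beta> i * (1 - \<epsilon>) < (1 / k) * (1 - \<epsilon>)" by simp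
      from mult_right_less_imp_less[OF this] e1 show ?thesis by simp
    qed
    have sA: "(\<Sum>i\<in>A. \<beta> i) \<le> real (card A)"
    proof -
      have "(\<Sum>i\<in>A. \<beta> i) \<le> (\<Sum>i\<in>A. 1)" using b unfolding A_def by (intro sum_mono) auto
      then show ?thesis by simp
    qed
    have sB: "(\<Sum>i\<in>B. \<beta> i) < (\<Sum>i\<in>B. 1 / k)"
      using Bne bB unfolding B_def by (intro sum_strict_mono) auto
    have "real Q = (\<Sum>i\<in>A. \<beta> i) + (\<Sum>i\<in>B. \<beta> i)"
      using bs AB fA unfolding B_def by (metis finite_Diff finite_lessThan sum.union_disjoint)
    also have "\<dots> < real (card A) + real (card B) / k" using sA sB by simp
    also have "\<dots> \<le> real Q"
    proof -
      define a where "a = real (card A)"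
      have a: "a \<le> real Q - 1" unfolding a_def using aQ Q1 by linarith
      have cB: "real (card B) = real M - a" unfolding a_def cardB using aQ QM by simp
      have "real M - a \<le> (real Q - a) * k"
      proof -
        have "(real Q - a) * k - (real M - a) = (real Q - a - 1) * (real M - real Q)"
          unfolding k_def by (simp add: algebra_simps)
        moreover have "0 \<le> (real Q - a - 1) * (real M - real Q)" using a QM M by simp
        ultimately show ?thesis by linarith
      qed
      then have "(real M - a) / k \<le> real Q - a" using k1 by (simp add: divide_le_eq)
      then show ?thesis unfolding cB a_def by simp
    qed
    finally show ?thesis by simp
  qed
qed



lemma prod_ge:
  fixes y :: "'a \<Rightarrow> real"
  shows "finite S \<Longrightarrow> (\<forall>v\<in>S. 0 \<le> y v \<and> y v \<le> 1) \<Longrightarrow> 1 - (\<Sum>v\<in>S. y v) \<le> (\<Prod>v\<in>S. 1 - y v)"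
proof (induction S rule: finite_induct)
  case empty then show ?case by simp
next
  case (insert x F)
  have y: "0 \<le> y x" "y x \<le> 1" using insert.prems by auto
  have IH: "1 - (\<Sum>v\<in>F. y v) \<le> (\<Prod>v\<in>F. 1 - y v)" using insert.IH insert.prems by auto
  have s0: "0 \<le> (\<Sum>v\<in>F. y v)" using insert.prems by (intro sum_nonneg) auto
  have "(1 - y x) * (1 - (\<Sum>v\<in>F. y v)) \<le> (1 - y x) * (\<Prod>v\<in>F. 1 - y v)"
    using IH y by (intro mult_left_mono) auto
  moreover have "1 - (y x + (\<Sum>v\<in>F. y v)) \<le> (1 - y x) * (1 - (\<Sum>v\<in>F. y v))"
  proof -
    have "0 \<le> y x * (\<Sum>v\<in>F. y v)" using y s0 by simp
    then show ?thesis by (simp add: algebra_simps)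
  qed
  ultimately show ?case using insert.hyps by simp
qed

lemma exists_good:
  fixes S :: "(complex^'n) set" and H :: "nat \<Rightarrow> complex^'n^'n" and a t :: "nat \<Rightarrow> real"
    and T :: real and M :: nat
  assumes fin: "finite S" and psd: "\<forall>i<M. psd_mat (H i)"
    and tdef: "\<forall>i<M. t i = (\<Sum>v\<in>S. Re (qform (H i) v))" and tpos: "\<forall>i<M. t i > 0"
    and Tdef: "T = (\<Sum>v\<in>S. (norm v)\<^sup>2)" and Tpos: "T > 0"
    and apos: "\<forall>i<M. a i > 0" and asum: "(\<Sum>i<M. 4 * a i) < 1"
  shows "\<exists>\<xi>. \<forall>i<M. Re (qform (H i) (wI S \<xi>)) > a i * t i / T * NI S \<xi>"
proof (rule ccontr)
  assume neg: "\<not> ?thesis"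
  define m where "m = 1 / (2 * T)"
  define lam where "lam = (\<lambda>i. 1 / (2 * a i * t i))"
  have m0: "0 \<le> m" unfolding m_def using Tpos by simp
  have lam0: "0 \<le> lam i" if "i < M" for i
  proof -
    have "0 < a i * t i" using apos tpos that by simp
    then show ?thesis unfolding lam_def by simp
  qed
  have lamk: "lam i * (a i * t i / T) = m" if "i < M" for i
  proof -
    have "a i > 0" "t i > 0" using apos tpos that by auto
    then show ?thesis unfolding lam_def m_def using Tpos by (simp add: field_simps)
  qed
  have vT: "(norm v)\<^sup>2 \<le> T" if "v \<in> S" for v
    unfolding Tdef using fin that by (intro member_le_sum) auto
  have small: "\<forall>v\<in>S. m * (norm v)\<^sup>2 < 1"
  proof
    fix v assume "v \<in> S"
    then have "m * (norm v)\<^sup>2 \<le> m * T" using vT m0 by (simp add: mult_left_mono)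
    also have "\<dots> = 1 / 2" unfolding m_def using Tpos by simp
    finally show "m * (norm v)\<^sup>2 < 1" by simp
  qed
  define P where "P = PiM S (\<lambda>_::complex^'n. G)"
  interpret prob_space P unfolding P_def by (rule prob_space_PiM) (rule prob_space_G)
  have pt: "1 \<le> (\<Sum>i<M. ennreal (FF (lam i) m (H i) S \<xi>))" for \<xi>
  proof -
    obtain i where i: "i < M" and bad: "Re (qform (H i) (wI S \<xi>)) \<le> a i * t i / T * NI S \<xi>"
      using neg by (meson not_less)
    have "lam i * Re (qform (H i) (wI S \<xi>)) \<le> lam i * (a i * t i / T * NI S \<xi>)"
      using bad lam0[OF i] by (rule mult_left_mono)
    also have "\<dots> = (lam i * (a i * t i / T)) * NI S \<xi>" by (simp only: mult.assoc)
    also have "\<dots> = m * NI S \<xi>" unfolding lamk[OF i] ..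
    finally have "0 \<le> - lam i * Re (qform (H i) (wI S \<xi>)) + m * NI S \<xi>" by simp
    then have "1 \<le> FF (lam i) m (H i) S \<xi>" unfolding FF_def by simp
    then have "1 \<le> ennreal (FF (lam i) m (H i) S \<xi>)" by (simp add: ennreal_1[symmetric] del: ennreal_1)
    also have "\<dots> \<le> (\<Sum>i<M. ennreal (FF (lam i) m (H i) S \<xi>))"
      using i by (intro member_le_sum) auto
    finally show ?thesis .
  qed
  have bnd: "(\<integral>\<^sup>+\<xi>. ennreal (FF (lam i) m (H i) S \<xi>) \<partial>P) \<le> ennreal (4 * a i)" if i: "i < M" for i
  proof -
    have "(\<integral>\<^sup>+\<xi>. ennreal (FF (lam i) m (H i) S \<xi>) \<partial>P)
      \<le> ennreal (1 / ((\<Prod>v\<in>S. 1 - m * (norm v)\<^sup>2) * (1 + lam i * (\<Sum>v\<in>S. Re (qform (H i) v)))))"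
      unfolding P_def using rec_bound[OF lam0[OF i] m0 fin small] psd i by auto
    also have "\<dots> \<le> ennreal (4 * a i)"
    proof (rule ennreal_leI)
      have pr: "1 - (\<Sum>v\<in>S. m * (norm v)\<^sup>2) \<le> (\<Prod>v\<in>S. 1 - m * (norm v)\<^sup>2)"
        by (rule prod_ge[OF fin]) (use small m0 in auto)
      have "(\<Sum>v\<in>S. m * (norm v)\<^sup>2) = m * T" unfolding Tdef by (simp add: sum_distrib_left)
      also have "\<dots> = 1 / 2" unfolding m_def using Tpos by simp
      finally have P2: "(\<Prod>v\<in>S. 1 - m * (norm v)\<^sup>2) \<ge> 1 / 2" using pr by simp
      have lt: "lam i * (\<Sum>v\<in>S. Re (qform (H i) v)) = 1 / (2 * a i)"
      proof -
        have "t i > 0" "(\<Sum>v\<in>S. Re (qform (H i) v)) = t i" using tdef i tpos by auto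
        then show ?thesis unfolding lam_def by simp
      qed
      have ai: "a i > 0" using apos i by simp
      have "1 / (4 * a i) \<le> 1 / 2 * (1 + 1 / (2 * a i))" using ai by (simp add: field_simps)
      also have "\<dots> \<le> (\<Prod>v\<in>S. 1 - m * (norm v)\<^sup>2) * (1 + 1 / (2 * a i))"
        using P2 ai by (intro mult_right_mono) auto
      finally have den: "1 / (4 * a i) \<le> (\<Prod>v\<in>S. 1 - m * (norm v)\<^sup>2) * (1 + lam i * (\<Sum>v\<in>S. Re (qform (H i) v)))"
        unfolding lt .
      have "0 < 1 / (4 * a i)" using ai by simp
      then show "1 / ((\<Prod>v\<in>S. 1 - m * (norm v)\<^sup>2) * (1 + lam i * (\<Sum>v\<in>S. Re (qform (H i) v)))) \<le> 4 * a i"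
      proof -
        let ?d = "(\<Prod>v\<in>S. 1 - m * (norm v)\<^sup>2) * (1 + lam i * (\<Sum>v\<in>S. Re (qform (H i) v)))"
        have dpos: "0 < ?d" using den \<open>0 < 1 / (4 * a i)\<close> by linarith
        have "1 / ?d \<le> 1 / (1 / (4 * a i))"
          by (rule divide_left_mono[OF den]) (use dpos \<open>0 < 1 / (4 * a i)\<close> in auto)
        then show ?thesis by simp
      qed
    qed
    finally show ?thesis .
  qed
  have "(1::ennreal) = emeasure P (space P)" by (simp add: emeasure_space_1)
  also have "\<dots> = (\<integral>\<^sup>+\<xi>. 1 \<partial>P)" by simp
  also have "\<dots> \<le> (\<integral>\<^sup>+\<xi>. (\<Sum>i<M. ennreal (FF (lam i) m (H i) S \<xi>)) \<partial>P)"
    by (rule nn_integral_mono) (rule pt)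
  also have "\<dots> = (\<Sum>i<M. (\<integral>\<^sup>+\<xi>. ennreal (FF (lam i) m (H i) S \<xi>) \<partial>P))"
    unfolding P_def by (rule nn_integral_sum) (rule meas_FF, simp)
  also have "\<dots> \<le> (\<Sum>i<M. ennreal (4 * a i))" by (intro sum_mono bnd) simp
  also have "\<dots> = ennreal (\<Sum>i<M. 4 * a i)" using apos by (intro sum_ennreal) (simp add: less_imp_le)
  finally have "ennreal 1 \<le> ennreal (\<Sum>i<M. 4 * a i)" by simp
  then have "1 \<le> (\<Sum>i<M. 4 * a i)"
    using apos by (subst (asm) ennreal_le_iff) (auto intro!: sum_nonneg simp: less_imp_le)
  then show False using asum by simp
qed



lemma feasible_bound:
  fixes H :: "nat \<Rightarrow> complex^'n^'n" and M Q :: nat and \<epsilon> :: real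
    and X :: "complex^'n^'n" and \<beta> :: "nat \<Rightarrow> real"
  assumes M: "M \<ge> 2" and Q1: "1 \<le> Q" and QM: "Q \<le> M - 1"
    and e0: "0 < \<epsilon>" and e1: "\<epsilon> < 1"
    and psdH: "\<forall>i<M. psd_mat (H i)"
    and psdX: "psd_mat X"
    and cons: "\<forall>i<M. Re (trace (H i ** X)) \<ge> \<beta> i + (1 - \<beta> i) * \<epsilon>"
    and bs: "(\<Sum>i<M. \<beta> i) = real Q"
    and b01: "\<forall>i<M. 0 \<le> \<beta> i \<and> \<beta> i \<le> 1"
  shows "v_QP M Q \<epsilon> H \<le> ereal (mu_C M Q \<epsilon> * Re (trace X))"
proof -
  define c where "c = c_eps M Q \<epsilon>"
  define mu where "mu = mu_C M Q \<epsilon>"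
  have kpos: "real M - real Q + 1 > 0" using QM M by linarith
  have cpos: "c > 0" unfolding c_def c_eps_def using e0 e1 kpos by (simp add: add_pos_nonneg)
  define D where "D = real M - real Q + real Q / c"
  have muD: "mu \<ge> 8 * D" unfolding mu_def mu_C_def D_def c_def by simp
  have Dpos: "D > 0"
  proof -
    have "real Q / c \<ge> 0" using cpos by simp
    moreover have "real M - real Q \<ge> 1" using QM M by linarith
    ultimately show ?thesis unfolding D_def by linarith
  qed
  have mupos: "mu > 0" using muD Dpos by linarith
  obtain S where fS: "finite S" and cS: "corth S" and Xeq: "X = (\<Sum>v\<in>S. outer v v)"
    using decomp[OF psdX] by blast
  define t where "t = (\<lambda>i. Re (trace (H i ** X)))"
  define T where "T = Re (trace X)"
  have tS: "t i = (\<Sum>v\<in>S. Re (qform (H i) v))" for i unfolding t_def by (rule trace_HX(1)[OF Xeq])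
  have TS: "T = (\<Sum>v\<in>S. (norm v)\<^sup>2)" unfolding T_def by (rule trace_HX(2)[OF Xeq])
  have teps: "t i \<ge> \<epsilon>" if "i < M" for i
  proof -
    have "\<beta> i + (1 - \<beta> i) * \<epsilon> - \<epsilon> = \<beta> i * (1 - \<epsilon>)" by (simp add: algebra_simps)
    moreover have "\<beta> i * (1 - \<epsilon>) \<ge> 0" using b01 that e1 by simp
    ultimately show ?thesis using cons that unfolding t_def by force
  qed
  have tpos: "\<forall>i<M. t i > 0" using teps e0 by (meson less_le_trans)
  have Tpos: "T > 0"
  proof (rule ccontr)
    assume "\<not> T > 0"
    moreover have "T \<ge> 0" unfolding TS by (intro sum_nonneg) simp
    ultimately have "T = 0" by simp
    then have "\<forall>v\<in>S. (norm v)\<^sup>2 = 0" unfolding TS using fS by (subst (asm) sum_nonneg_eq_0_iff) auto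
    then have "\<forall>v\<in>S. v = 0" by simp
    then have z: "\<And>v. v \<in> S \<Longrightarrow> Re (qform (H 0) v) = 0" by (auto simp: qform_def)
    then have "t 0 = 0" unfolding tS by (intro sum.neutral) auto
    moreover have "0 < t 0" using tpos M by simp
    ultimately show False by simp
  qed
  have tb: "\<forall>i<M. t i \<ge> \<beta> i + (1 - \<beta> i) * \<epsilon>" using cons unfolding t_def .
  obtain Sel where Sel: "Sel \<subseteq> {..<M}" "card Sel = Q" and tSel: "\<forall>i\<in>Sel. t i \<ge> c"
    using select[OF M Q1 QM e0 e1 b01 bs tb] unfolding c_def by blast
  define d where "d = (\<lambda>i. if i \<in> Sel then 1 / c else 1)"
  define a where "a = (\<lambda>i. d i / mu)"
  have fSel: "finite Sel" using Sel(1) finite_subset by blast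
  have sumd: "(\<Sum>i<M. d i) = D"
  proof -
    have "(\<Sum>i<M. d i) = (\<Sum>i\<in>{..<M} \<inter> Sel. 1 / c) + (\<Sum>i\<in>{..<M} - Sel. 1)"
      unfolding d_def by (simp add: sum.If_cases Diff_eq)
    also have "{..<M} \<inter> Sel = Sel" using Sel(1) by auto
    also have "card ({..<M} - Sel) = M - Q" using Sel by (simp add: card_Diff_subset fSel)
    then have "(\<Sum>i\<in>{..<M} - Sel. (1::real)) = real M - real Q" using QM by simp
    finally show ?thesis unfolding D_def using Sel(2) by simp
  qed
  have apos: "\<forall>i<M. a i > 0" unfolding a_def d_def using cpos mupos by simp
  have asum: "(\<Sum>i<M. 4 * a i) < 1"
  proof -
    have "(\<Sum>i<M. 4 * a i) = 4 * D / mu" unfolding a_def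
      by (simp add: sum_distrib_left[symmetric] sum_divide_distrib[symmetric] sumd)
    also have "\<dots> \<le> 1 / 2" using muD mupos Dpos by (simp add: field_simps)
    finally show ?thesis by simp
  qed
  obtain \<xi> where good: "\<forall>i<M. Re (qform (H i) (wI S \<xi>)) > a i * t i / T * NI S \<xi>"
  proof -
    have tdef: "\<forall>i<M. t i = (\<Sum>v\<in>S. Re (qform (H i) v))" using tS by simp
    show ?thesis using exists_good[OF fS psdH tdef tpos TS Tpos apos asum] that by blast
  qed
  define w where "w = wI S \<xi>"
  define N where "N = NI S \<xi>"
  have Nw: "N = (norm w)\<^sup>2" unfolding N_def w_def wI_def NI_def
    by (rule norm_orth_sum[OF fS cS, symmetric])
  have N0: "N \<ge> 0" unfolding Nw by simp
  have Npos: "N > 0"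
  proof -
    have "0 < M" using M by simp
    then have "Re (qform (H 0) w) > a 0 * t 0 / T * N" using good unfolding w_def N_def by blast
    moreover have "a 0 * t 0 / T * N \<ge> 0"
    proof -
      have "a 0 > 0" "t 0 > 0" using apos tpos \<open>0 < M\<close> by auto
      then show ?thesis using Tpos N0 by simp
    qed
    ultimately have "Re (qform (H 0) w) \<noteq> 0" by linarith
    then have "w \<noteq> 0" by (auto simp: qform_def)
    then show ?thesis unfolding Nw by simp
  qed
  define \<sigma> where "\<sigma> = sqrt (mu * T / N)"
  have s2: "\<sigma>\<^sup>2 = mu * T / N" unfolding \<sigma>_def using mupos Tpos Npos by simp
  define w' where "w' = of_real \<sigma> *s w"
  have nw': "(norm w')\<^sup>2 = mu * T"
    unfolding w'_def norm_smult using s2 Npos by (simp add: Nw[symmetric])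
  have qw': "Re (qform (H i) w') > d i * t i" if i: "i < M" for i
  proof -
    have herm: "hermitian_mat (H i)" using psdH i by (simp add: psd_mat_def)
    have "Re (qform (H i) w') = \<sigma>\<^sup>2 * Re (qform (H i) w)"
      unfolding w'_def qform_scale[OF herm] by simp
    moreover have "Re (qform (H i) w) > a i * t i / T * N" using good i unfolding w_def N_def by blast
    moreover have "\<sigma>\<^sup>2 * (a i * t i / T * N) = d i * t i"
      unfolding s2 a_def using mupos Tpos Npos by (simp add: field_simps)
    moreover have "\<sigma>\<^sup>2 > 0" using s2 mupos Tpos Npos by simp
    ultimately show ?thesis using mult_strict_left_mono[of "a i * t i / T * N" "Re (qform (H i) w)" "\<sigma>\<^sup>2"]
      by simp
  qed
  define \<beta>' where "\<beta>' = (\<lambda>i. if i \<in> Sel then 1 else (0::real))"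
  have feas: "\<forall>i<M. Re (qform (H i) w') \<ge> \<beta>' i + (1 - \<beta>' i) * \<epsilon>"
  proof (intro allI impI)
    fix i assume i: "i < M"
    show "Re (qform (H i) w') \<ge> \<beta>' i + (1 - \<beta>' i) * \<epsilon>"
    proof (cases "i \<in> Sel")
      case True
      then have "d i * t i \<ge> 1" unfolding d_def using tSel cpos by (simp add: field_simps)
      then show ?thesis using qw'[OF i] True unfolding \<beta>'_def by simp
    next
      case False
      then have "d i * t i \<ge> \<epsilon>" unfolding d_def using teps i by simp
      then show ?thesis using qw'[OF i] False unfolding \<beta>'_def by simp
    qed
  qed
  have b01': "\<forall>i<M. \<beta>' i \<in> {0, 1}" unfolding \<beta>'_def by simp
  have bs': "(\<Sum>i<M. \<beta>' i) = real Q"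
  proof -
    have "(\<Sum>i<M. \<beta>' i) = real (card ({..<M} \<inter> Sel))" unfolding \<beta>'_def
      by (simp add: sum.If_cases)
    also have "{..<M} \<inter> Sel = Sel" using Sel(1) by auto
    finally show ?thesis using Sel(2) by simp
  qed
  have "ereal ((norm w')\<^sup>2) \<in> {ereal ((norm w)\<^sup>2) | w \<beta>.
      (\<forall>i<M. \<beta> i \<in> {0,1}) \<and>
      (\<forall>i<M. Re (qform (H i) w) \<ge> \<beta> i + (1 - \<beta> i) * \<epsilon>) \<and>
      (\<Sum>i<M. \<beta> i) = real Q}"
    unfolding mem_Collect_eq
    by (rule exI[of _ w'], rule exI[of _ \<beta>']) (use b01' feas bs' in blast)
  then have "v_QP M Q \<epsilon> H \<le> ereal ((norm w')\<^sup>2)" unfolding v_QP_def by (rule Inf_lower)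
  then show ?thesis using nw' unfolding mu_def T_def by simp
qed



theorem theorem2p6:
  fixes H :: "nat \<Rightarrow> complex^'n^'n" and M Q :: nat and \<epsilon> :: real
  assumes "CARD('n) \<ge> 2" and "M \<ge> 2" and "1 \<le> Q" and "Q \<le> M - 1"
    and "0 < \<epsilon>" and "\<epsilon> < 1"
    and "\<forall>i<M. psd_mat (H i)"
  shows "v_QP M Q \<epsilon> H \<le> ereal (mu_C M Q \<epsilon>) * v_SDP2 M Q \<epsilon> H"
proof -
  note M = assms(2) and Q1 = assms(3) and QM = assms(4) and e0 = assms(5) and e1 = assms(6)
    and psdH = assms(7)
  define mu where "mu = mu_C M Q \<epsilon>"
  define c where "c = c_eps M Q \<epsilon>"
  have kpos: "real M - real Q + 1 > 0" using QM M by linarith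
  have cpos: "c > 0" unfolding c_def c_eps_def using e0 e1 kpos by (simp add: add_pos_nonneg)
  define D where "D = real M - real Q + real Q / c"
  have muD: "mu \<ge> 8 * D" unfolding mu_def mu_C_def D_def c_def by simp
  have Dpos: "D > 0"
  proof -
    have "real Q / c \<ge> 0" using cpos by simp
    moreover have "real M - real Q \<ge> 1" using QM M by linarith
    ultimately show ?thesis unfolding D_def by linarith
  qed
  have mupos: "mu > 0" using muD Dpos by linarith
  have "ereal (1 / mu) * v_QP M Q \<epsilon> H \<le> v_SDP2 M Q \<epsilon> H"
    unfolding v_SDP2_def
  proof (rule Inf_greatest)
    fix y assume "y \<in> {ereal (Re (trace X)) | (X :: complex^'n^'n) \<beta>.
      psd_mat X \<and>
      (\<forall>i<M. Re (trace (H i ** X)) \<ge> \<beta> i + (1 - \<beta> i) * \<epsilon>) \<and>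
      (\<Sum>i<M. \<beta> i) = real Q \<and>
      (\<forall>i<M. 0 \<le> \<beta> i \<and> \<beta> i \<le> 1)}"
    then obtain X :: "complex^'n^'n" and \<beta> where y: "y = ereal (Re (trace X))" and X: "psd_mat X"
      and cons: "\<forall>i<M. Re (trace (H i ** X)) \<ge> \<beta> i + (1 - \<beta> i) * \<epsilon>"
      and bs: "(\<Sum>i<M. \<beta> i) = real Q" and b01: "\<forall>i<M. 0 \<le> \<beta> i \<and> \<beta> i \<le> 1"
      by blast
    have "v_QP M Q \<epsilon> H \<le> ereal (mu * Re (trace X))"
      unfolding mu_def by (rule feasible_bound[OF M Q1 QM e0 e1 psdH X cons bs b01])
    then have "ereal (1 / mu) * v_QP M Q \<epsilon> H \<le> ereal (1 / mu) * ereal (mu * Re (trace X))"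
      by (rule ereal_mult_left_mono) (use mupos in simp)
    also have "\<dots> = y" using mupos y by simp
    finally show "ereal (1 / mu) * v_QP M Q \<epsilon> H \<le> y" .
  qed
  then have "ereal mu * (ereal (1 / mu) * v_QP M Q \<epsilon> H) \<le> ereal mu * v_SDP2 M Q \<epsilon> H"
    by (rule ereal_mult_left_mono) (use mupos in simp)
  moreover have "ereal mu * (ereal (1 / mu) * v_QP M Q \<epsilon> H) = v_QP M Q \<epsilon> H"
    using mupos by (simp add: mult.assoc[symmetric])
  ultimately show ?thesis unfolding mu_def by simp
qed

end
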